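(* Let $k\ge5$, $m\ge0$, $d\ge0$ be integers with $d$ divisible by $4$. If $$m\ge \min\left\{\left\lceil \frac{(k+2)(k-3)}{2k}\right\rceil,\ \left\lceil \sqrt{2k+\tfrac14}-\tfrac32\right\rceil\right\}-1,$$ then $d_{so}(N,k)=m2^{k-1}+d+2$ for every integer $N$ with $m(2^k-1)+g(k,d+2)+1\le N\le m(2^k-1)+g(k,d+4)-1$.
   Context: $g(k,d)=\sum_{i=0}^{k-1}\lceil d/2^i\rceil$. $d_{so}(n,k)$ denotes the largest minimum distance among all binary self-orthogonal $[n,k]$ codes (a code $C$ is self-orthogonal if $C\subseteq C^\perp$). *)

theory Defs
  imports Complex_Main
begin

text \<open>Binary vectors of length n are bool lists of length n (True = 1).\<close>

definition vadd :: "bool list \<Rightarrow> bool list \<Rightarrow> bool list" where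
  "vadd x y = map2 (\<noteq>) x y"

definition wt :: "bool list \<Rightarrow> nat" where
  "wt x = length (filter id x)"

definition orth :: "bool list \<Rightarrow> bool list \<Rightarrow> bool" where
  "orth x y = even (card {i. i < length x \<and> x ! i \<and> y ! i})"

definition lin_code :: "nat \<Rightarrow> nat \<Rightarrow> bool list set \<Rightarrow> bool" where
  "lin_code n k C \<longleftrightarrow> (\<forall>x\<in>C. length x = n) \<and> replicate n False \<in> C \<and>
     (\<forall>x\<in>C. \<forall>y\<in>C. vadd x y \<in> C) \<and> card C = 2 ^ k"

definition self_orth :: "bool list set \<Rightarrow> bool" where
  "self_orth C \<longleftrightarrow> (\<forall>x\<in>C. \<forall>y\<in>C. orth x y)"

definition so_code :: "nat \<Rightarrow> nat \<Rightarrow> bool list set \<Rightarrow> bool" where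
  "so_code n k C \<longleftrightarrow> lin_code n k C \<and> self_orth C"

definition min_dist :: "bool list set \<Rightarrow> nat" where
  "min_dist C = Min {wt x | x. x \<in> C \<and> x \<noteq> replicate (length x) False}"

definition d_so :: "nat \<Rightarrow> nat \<Rightarrow> nat" where
  "d_so n k = Max {min_dist C | C. so_code n k C}"

definition g :: "nat \<Rightarrow> nat \<Rightarrow> nat" where
  "g k d = (\<Sum>i<k. nat \<lceil>real d / 2 ^ i\<rceil>)"

end

theory Submission
  imports Defs "Berlekamp_Zassenhaus.Distinct_Degree_Factorization"
begin

type_synonym F2 = "bool mod_ring"

abbreviation QQ :: "nat \<Rightarrow> F2 poly" where "QQ n \<equiv> monom 1 1 ^ (2 ^ n) - monom 1 1"

lemma two_F2: "(2::F2) = 0"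
proof -
  have "of_nat CARD(bool) = (0::F2)" by (rule of_nat_card_eq_0)
  then show ?thesis by simp
qed

lemma of_nat_pow2_F2: "n \<ge> 1 \<Longrightarrow> (of_nat (2^n) :: F2) = 0"
  using two_F2 by (cases n) auto

lemma pow2_gt1: "n \<ge> 1 \<Longrightarrow> (1::nat) < 2 ^ n"
  using one_less_power[of "2::nat" n] by simp

lemma QQ_nz: "n \<ge> 1 \<Longrightarrow> QQ n \<noteq> 0"
proof
  assume n: "n \<ge> 1" and z: "QQ n = 0"
  have "coeff (QQ n) 1 = 0" using z by simp
  moreover have "(2::nat)^n \<noteq> 1" using pow2_gt1[OF n] n by simp
  ultimately show False using n unfolding x_pow_n by (simp add: coeff_monom)
qed

lemma degree_QQ: "n \<ge> 1 \<Longrightarrow> degree (QQ n) = 2 ^ n"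
proof -
  assume n: "n \<ge> 1"
  have "(2::nat)^n > 1" using pow2_gt1[OF n] .
  then show ?thesis unfolding x_pow_n by (subst degree_minus_eq_right) (auto simp: degree_monom_eq)
qed

lemma pderiv_QQ: "n \<ge> 1 \<Longrightarrow> pderiv (QQ n) = -1"
proof -
  assume n: "n \<ge> 1"
  have "pderiv (monom (1::F2) 1 ^ 2 ^ n) = 0"
    unfolding x_pow_n pderiv_monom using of_nat_pow2_F2[OF n] by simp
  then show ?thesis by (simp add: pderiv_diff pderiv_monom)
qed

lemma irreducible_exists: 
  assumes n: "n \<ge> 1" shows "\<exists>f :: F2 poly. irreducible f \<and> degree f = n"
proof (rule ccontr)
  assume no: "\<not> ?thesis"
  define P where "P = (\<Prod>d\<in>{1..<n}. QQ d)"
  have Pnz: "P \<noteq> 0" unfolding P_def using QQ_nz by auto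
  have degP: "degree P = (\<Sum>d\<in>{1..<n}. 2 ^ d)" unfolding P_def
    by (subst degree_prod_sum_eq) (use QQ_nz degree_QQ in auto)
  have "QQ n dvd P"
  proof (rule multiplicity_le_imp_dvd)
    show "QQ n \<noteq> 0" using QQ_nz n by auto
    fix p :: "F2 poly" assume pr: "prime p"
    show "multiplicity p (QQ n) \<le> multiplicity p P"
    proof (cases "p dvd QQ n")
      case False then show ?thesis by (simp add: not_dvd_imp_multiplicity_0)
    next
      case True
      have irr: "irreducible p" using pr by (intro prime_elem_imp_irreducible prime_imp_prime_elem)
      have nu: "\<not> is_unit p" using pr prime_elem_not_unit prime_imp_prime_elem by blast
      have pnz: "p \<noteq> 0" using pr by auto
      have dp: "degree p \<ge> 1" 
      proof (rule ccontr)
        assume "\<not> degree p \<ge> 1" 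
        then have "degree p = 0" by simp
        then have "is_unit p" using pnz by (simp add: is_unit_iff_degree)
        with nu show False by simp
      qed
      have "\<not> degree p > n"
        using degree_divisor2[OF irr refl, of n] n True by auto
      moreover have "degree p \<noteq> n" using no irr by auto
      ultimately have dlt: "degree p \<in> {1..<n}" using dp by auto
      have "p dvd QQ (degree p)" using degree_divisor1[OF irr refl] by simp
      then have "p dvd P" unfolding P_def using dlt
        by (meson dvd_prodI dvd_trans finite_atLeastLessThan)
      then have m1: "multiplicity p P \<ge> 1" using Pnz nu
        by (metis power_one_right power_dvd_iff_le_multiplicity)
      have "\<not> p ^ 2 dvd QQ n"
      proof
        assume "p ^ 2 dvd QQ n"
        then obtain h where h: "QQ n = p * p * h" by (metis dvd_def power2_eq_square)
        have e: "pderiv (QQ n) = p * (2 * h * pderiv p + p * pderiv h)"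
          unfolding h by (simp add: pderiv_mult algebra_simps)
        have "p dvd pderiv (QQ n)" using e by (metis dvd_triv_left)
        then have "p dvd 1" using pderiv_QQ[OF n] by simp
        with nu show False by blast
      qed
      then have "multiplicity p (QQ n) < 2"
        using power_dvd_iff_le_multiplicity[of "QQ n" p 2] QQ_nz[OF n] nu by auto
      with m1 show ?thesis by simp
    qed
  qed
  then have "degree (QQ n) \<le> degree P" using Pnz by (rule dvd_imp_degree_le)
  moreover have "(\<Sum>d\<in>{1..<n}. (2::nat) ^ d) < 2 ^ n"
  proof -
    have "(\<Sum>d\<in>{1..<n}. (2::nat) ^ d) \<le> (\<Sum>d<n. 2 ^ d)" by (intro sum_mono2) auto
    also have "\<dots> = 2 ^ n - 1" by (induct n) auto
    also have "\<dots> < 2 ^ n" by simp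
    finally show ?thesis .
  qed
  ultimately show False using degree_QQ[OF n] degP by simp
qed

fun dot :: "bool list \<Rightarrow> bool list \<Rightarrow> bool" where
  "dot (a # as) (b # bs) = ((a \<and> b) \<noteq> dot as bs)"
| "dot _ _ = False"

abbreviation zv :: "nat \<Rightarrow> bool list" where "zv n \<equiv> replicate n False"

definition Vk :: "nat \<Rightarrow> bool list set" where "Vk k = {xs. length xs = k}"

lemma vadd_Cons[simp]: "vadd (a # x) (b # y) = (a \<noteq> b) # vadd x y"
  by (simp add: vadd_def)

lemma vadd_Nil[simp]: "vadd [] y = []" "vadd x [] = []"
  by (auto simp: vadd_def)

lemma length_vadd[simp]: "length (vadd x y) = min (length x) (length y)"
  by (simp add: vadd_def)

lemma dot_vadd_right: "length x = length y \<Longrightarrow> dot u (vadd x y) = (dot u x \<noteq> dot u y)"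
proof (induction x y arbitrary: u rule: list_induct2)
  case Nil then show ?case by simp
next
  case (Cons a x b y) then show ?case by (cases u) auto
qed

lemma dot_comm: "dot u x = dot x u"
  by (induction u x rule: dot.induct) auto

lemma dot_vadd_left: "length u = length v \<Longrightarrow> dot (vadd u v) x = (dot u x \<noteq> dot v x)"
  using dot_vadd_right[of u v x] by (simp add: dot_comm)

lemma dot_zero_left[simp]: "dot (zv n) x = False"
  by (induction n arbitrary: x) (auto, metis dot.simps list.exhaust replicate_Suc)

lemma dot_zero_right[simp]: "dot x (zv n) = False"
  using dot_zero_left dot_comm by metis

lemma vadd_self[simp]: "vadd x x = zv (length x)"
  by (induction x) auto

lemma vadd_zero_right[simp]: "length x = n \<Longrightarrow> vadd x (zv n) = x"
  by (induction x arbitrary: n) auto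

lemma vadd_zero_left[simp]: "length x = n \<Longrightarrow> vadd (zv n) x = x"
  by (induction x arbitrary: n) auto

lemma vadd_comm: "vadd x y = vadd y x"
  unfolding vadd_def by (induction x y rule: list_induct2') auto

lemma vadd_assoc: "vadd (vadd x y) z = vadd x (vadd y z)"
proof (induction x arbitrary: y z)
  case Nil then show ?case by simp
next
  case (Cons a x) then show ?case by (cases y; cases z) auto
qed

lemma vadd_eq_zero_iff: "length x = length y \<Longrightarrow> vadd x y = zv (length x) \<longleftrightarrow> x = y"
  by (induction x y rule: list_induct2) auto

lemma finite_Vk[simp]: "finite (Vk k)"
proof -
  have "Vk k = {xs. set xs \<subseteq> UNIV \<and> length xs = k}" unfolding Vk_def by auto
  then show ?thesis using finite_lists_length_eq[of "UNIV :: bool set" k] by simp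
qed

lemma card_Vk[simp]: "card (Vk k) = 2 ^ k"
proof -
  have "Vk k = {xs. set xs \<subseteq> UNIV \<and> length xs = k}" unfolding Vk_def by auto
  then show ?thesis using card_lists_length_eq[of "UNIV :: bool set" k] by simp
qed

definition vl :: "nat \<Rightarrow> bool list list" where
  "vl k = (SOME xs. set xs = Vk k \<and> distinct xs)"

lemma vl: "set (vl k) = Vk k" "distinct (vl k)"
proof -
  have "\<exists>xs. set xs = Vk k \<and> distinct xs" using finite_distinct_list[OF finite_Vk] .
  then have "set (vl k) = Vk k \<and> distinct (vl k)" unfolding vl_def by (rule someI_ex)
  then show "set (vl k) = Vk k" "distinct (vl k)" by auto
qed

text \<open>Columns of a generator matrix given by a multiplicity function.\<close>
definition cols :: "nat \<Rightarrow> (bool list \<Rightarrow> nat) \<Rightarrow> bool list list" where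
  "cols k f = concat (map (\<lambda>x. replicate (f x) x) (vl k))"

lemma length_filter_concat_rep:
  "length (filter P (concat (map (\<lambda>x. replicate (f x) x) xs))) = sum_list (map (\<lambda>x. if P x then f x else 0) xs)"
  by (induction xs) auto

lemma length_filter_cols: "length (filter P (cols k f)) = (\<Sum>x\<in>Vk k. if P x then f x else 0)"
proof -
  have "length (filter P (cols k f)) = sum_list (map (\<lambda>x. if P x then f x else 0) (vl k))"
    unfolding cols_def by (rule length_filter_concat_rep)
  also have "\<dots> = (\<Sum>x\<in>Vk k. if P x then f x else 0)"
    using vl by (simp add: sum_list_distinct_conv_sum_set)
  finally show ?thesis .
qed

lemma length_cols: "length (cols k f) = (\<Sum>x\<in>Vk k. f x)"
  using length_filter_cols[of "\<lambda>_. True" k f] by simp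

lemma set_cols: "set (cols k f) \<subseteq> Vk k"
  unfolding cols_def using vl by auto

definition enc :: "nat \<Rightarrow> (bool list \<Rightarrow> nat) \<Rightarrow> bool list \<Rightarrow> bool list" where
  "enc k f u = map (dot u) (cols k f)"

lemma length_enc[simp]: "length (enc k f u) = (\<Sum>x\<in>Vk k. f x)"
  by (simp add: enc_def length_cols)

lemma wt_enc: "wt (enc k f u) = (\<Sum>x\<in>Vk k. if dot u x then f x else 0)"
  unfolding wt_def enc_def by (simp add: filter_map comp_def length_filter_cols)

lemma enc_vadd: "length u = k \<Longrightarrow> length v = k \<Longrightarrow> vadd (enc k f u) (enc k f v) = enc k f (vadd u v)"
proof -
  assume u: "length u = k" and v: "length v = k"
  have "vadd (map (dot u) cs) (map (dot v) cs) = map (\<lambda>c. dot u c \<noteq> dot v c) cs" for cs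
    by (induction cs) auto
  moreover have "map (\<lambda>c. dot u c \<noteq> dot v c) (cols k f) = map (dot (vadd u v)) (cols k f)"
    using u v by (auto simp: dot_vadd_left)
  ultimately show ?thesis unfolding enc_def by simp
qed

lemma map_const_False: "map (\<lambda>_. False) xs = replicate (length xs) False"
  by (induction xs) auto

lemma enc_zero: "enc k f (zv k) = zv (\<Sum>x\<in>Vk k. f x)"
proof -
  have "map (dot (zv k)) xs = replicate (length xs) False" for xs
    by (induction xs) auto
  then show ?thesis unfolding enc_def by (simp add: length_cols)
qed

lemma orth_enc: "orth (enc k f u) (enc k f v) \<longleftrightarrow> even (\<Sum>x\<in>Vk k. if dot u x \<and> dot v x then f x else 0)"
proof -
  have "card {i. i < length (enc k f u) \<and> enc k f u ! i \<and> enc k f v ! i}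
      = length (filter (\<lambda>x. dot u x \<and> dot v x) (cols k f))"
    unfolding length_filter_conv_card enc_def by (auto intro!: arg_cong[where f=card])
  then show ?thesis unfolding orth_def by (simp add: length_filter_cols)
qed

definition subsp :: "nat \<Rightarrow> bool list set \<Rightarrow> bool" where
  "subsp k V \<longleftrightarrow> V \<subseteq> Vk k \<and> zv k \<in> V \<and> (\<forall>x\<in>V. \<forall>y\<in>V. vadd x y \<in> V)"

definition cnt :: "bool list set \<Rightarrow> (bool list \<Rightarrow> bool) \<Rightarrow> nat" where
  "cnt V P = card {x\<in>V. P x}"

lemma subsp_Vk: "subsp k (Vk k)"
  unfolding subsp_def Vk_def by auto

lemma subsp_finite: "subsp k V \<Longrightarrow> finite V"
  unfolding subsp_def using finite_Vk finite_subset by blast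

lemma half_lemma:
  assumes V: "subsp k V" and u: "length u = k" and x0: "x0 \<in> V" "dot u x0"
  shows "2 * cnt V (dot u) = card V"
proof -
  let ?A = "{x\<in>V. dot u x}" and ?B = "{x\<in>V. \<not> dot u x}"
  have fin: "finite V" using subsp_finite[OF V] .
  have len: "\<And>x. x \<in> V \<Longrightarrow> length x = k" using V unfolding subsp_def Vk_def by auto
  define h where "h x = vadd x x0" for x
  have hh: "h (h x) = x" if "x \<in> V" for x
    unfolding h_def using len[OF that] len[OF x0(1)] by (simp add: vadd_assoc)
  have hV: "h x \<in> V" if "x \<in> V" for x unfolding h_def using V that x0 unfolding subsp_def by auto
  have hd: "dot u (h x) = (\<not> dot u x)" if "x \<in> V" for x
    unfolding h_def using len[OF that] len[OF x0(1)] x0(2) by (simp add: dot_vadd_right)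
  have "bij_betw h ?A ?B"
  proof (rule bij_betw_imageI)
    show "inj_on h ?A" by (metis (no_types, lifting) hh inj_onI mem_Collect_eq)
    show "h ` ?A = ?B"
    proof
      show "h ` ?A \<subseteq> ?B" using hV hd by auto
      show "?B \<subseteq> h ` ?A"
      proof
        fix y assume "y \<in> ?B"
        then have "h y \<in> ?A" "h (h y) = y" using hV hd hh by auto
        then show "y \<in> h ` ?A" by (metis image_eqI)
      qed
    qed
  qed
  then have "card ?A = card ?B" by (rule bij_betw_same_card)
  moreover have "card V = card ?A + card ?B"
  proof -
    have "V = ?A \<union> ?B" by auto
    then have "card V = card (?A \<union> ?B)" by simp
    also have "\<dots> = card ?A + card ?B" using fin by (intro card_Un_disjoint) auto
    finally show ?thesis .
  qed
  ultimately show ?thesis unfolding cnt_def by simp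
qed

lemma cnt_sub_cases:
  assumes V: "subsp k V" and u: "length u = k" and cV: "card V = 2 ^ e" and e: "e \<ge> 1"
  shows "cnt V (dot u) = 0 \<or> cnt V (dot u) = 2 ^ (e - 1)"
proof (cases "\<exists>x0\<in>V. dot u x0")
  case True
  then obtain x0 where "x0 \<in> V" "dot u x0" by blast
  from half_lemma[OF V u this] cV have h: "2 * cnt V (dot u) = 2 ^ e" by simp
  have "(2::nat) ^ e = 2 * 2 ^ (e - 1)" using e by (cases e) auto
  with h have "cnt V (dot u) = 2 ^ (e - 1)" by simp
  then show ?thesis by simp
next
  case False
  then have em: "{x\<in>V. dot u x} = {}" by auto
  have "cnt V (dot u) = 0" unfolding cnt_def em by simp
  then show ?thesis by simp
qed

lemma cnt_le: 
  assumes V: "subsp k V" and u: "length u = k" and cV: "card V = 2 ^ e" and e: "e \<ge> 1"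
  shows "cnt V (dot u) \<le> 2 ^ (e - 1)"
  using cnt_sub_cases[OF assms] by auto

lemma cnt_Vk: 
  assumes u: "length u = k" and nz: "u \<noteq> zv k"
  shows "cnt (Vk k) (dot u) = 2 ^ (k - 1)"
proof -
  have "\<exists>i<k. u ! i"
  proof (rule ccontr)
    assume "\<not> (\<exists>i<k. u ! i)"
    then have "\<forall>y\<in>set u. y = False" using u by (auto simp: in_set_conv_nth)
    then have "u = zv k" using u by (intro replicate_eqI) auto
    with nz show False by simp
  qed
  then obtain i where i: "i < k" "u ! i" by blast
  define x0 where "x0 = (zv k)[i := True]"
  have x0: "x0 \<in> Vk k" unfolding x0_def Vk_def by simp
  have "dot u x0" 
  proof -
    have "\<And>u i. i < length u \<Longrightarrow> dot u ((zv (length u))[i := True]) = u ! i"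
    proof -
      fix u :: "bool list" and i
      show "i < length u \<Longrightarrow> dot u ((zv (length u))[i := True]) = u ! i"
        by (induction u arbitrary: i) (auto simp: nth_Cons' split: nat.splits)
    qed
    then show ?thesis unfolding x0_def using i u by auto
  qed
  have k1: "k \<ge> 1" using i by simp
  from half_lemma[OF subsp_Vk u x0 \<open>dot u x0\<close>] have h: "2 * cnt (Vk k) (dot u) = 2 ^ k" by simp
  have "(2::nat) ^ k = 2 * 2 ^ (k - 1)" using k1 by (cases k) auto
  with h show ?thesis by simp
qed

lemma inter_identity:
  assumes A: "A \<subseteq> Vk k" and u: "length u = k" and v: "length v = k" and fin: "finite A"
  shows "2 * (\<Sum>x\<in>A. if dot u x \<and> dot v x then gg x else 0) + (\<Sum>x\<in>A. if dot (vadd u v) x then gg x else 0)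
       = (\<Sum>x\<in>A. if dot u x then gg x else 0) + (\<Sum>x\<in>A. if dot v x then gg x else (0::nat))"
proof -
  have "\<And>x. x \<in> A \<Longrightarrow> 2 * (if dot u x \<and> dot v x then gg x else 0) + (if dot (vadd u v) x then gg x else 0)
       = (if dot u x then gg x else 0) + (if dot v x then gg x else 0)"
    using u v by (auto simp: dot_vadd_left)
  then have "(\<Sum>x\<in>A. 2 * (if dot u x \<and> dot v x then gg x else 0) + (if dot (vadd u v) x then gg x else 0))
      = (\<Sum>x\<in>A. (if dot u x then gg x else 0) + (if dot v x then gg x else 0))"
    by (rule sum.cong[OF refl])
  then show ?thesis by (simp add: sum.distrib sum_distrib_left)
qed

lemma cnt_as_sum: "finite V \<Longrightarrow> cnt V P = (\<Sum>x\<in>V. if P x then 1 else 0)"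
  unfolding cnt_def by (simp add: sum.inter_filter[symmetric])

lemma even_inter:
  assumes V: "subsp k V" and u: "length u = k" and v: "length v = k" and cV: "card V = 2 ^ e" and e: "e \<ge> 3"
  shows "even (cnt V (\<lambda>x. dot u x \<and> dot v x))"
proof -
  have fin: "finite V" using subsp_finite[OF V] .
  have A: "V \<subseteq> Vk k" using V unfolding subsp_def by auto
  have uv: "length (vadd u v) = k" using u v by simp
  have id: "2 * cnt V (\<lambda>x. dot u x \<and> dot v x) + cnt V (dot (vadd u v)) = cnt V (dot u) + cnt V (dot v)"
    using inter_identity[OF A u v fin, of "\<lambda>_. 1"] fin by (simp add: cnt_as_sum)
  have e1: "e \<ge> 1" using e by simp
  have d4: "4 dvd (2::nat) ^ (e - 1)"
  proof -
    have "e - 1 = (e - 3) + 2" using e by simp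
    then have "(2::nat) ^ (e - 1) = 2 ^ (e - 3) * 2 ^ 2" by (metis power_add)
    then show ?thesis by simp
  qed
  have c4: "4 dvd cnt V (dot w)" if "length w = k" for w
    using cnt_sub_cases[OF V that cV e1] d4 by auto
  have "4 dvd 2 * cnt V (\<lambda>x. dot u x \<and> dot v x) + cnt V (dot (vadd u v))"
    using id c4[OF u] c4[OF v] by simp
  then have "4 dvd 2 * cnt V (\<lambda>x. dot u x \<and> dot v x)"
    using c4[OF uv] by (simp add: dvd_add_left_iff)
  then show ?thesis by presburger
qed

definition GG :: "nat \<Rightarrow> nat \<Rightarrow> nat" where
  "GG k D = (\<Sum>i<k. (D + 2 ^ i - 1) div 2 ^ i)"

lemma div_step: fixes D i :: nat shows "(D + 2 ^ Suc i - 1) div 2 ^ Suc i = ((D + 1) div 2 + 2 ^ i - 1) div 2 ^ i"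
proof -
  obtain j where j: "(2::nat) ^ i = Suc j" by (metis not0_implies_Suc power_not_zero zero_neq_numeral)
  have "D + 2 ^ Suc i - 1 = (D + 1) + 2 * j" using j by simp
  then have "(D + 2 ^ Suc i - 1) div 2 = (D + 1) div 2 + j" by simp
  then have "(D + 2 ^ Suc i - 1) div 2 = (D + 1) div 2 + 2 ^ i - 1" using j by simp
  moreover have "(D + 2 ^ Suc i - 1) div 2 ^ Suc i = ((D + 2 ^ Suc i - 1) div 2) div 2 ^ i"
    by (simp add: div_mult2_eq)
  ultimately show ?thesis by simp
qed

lemma GG_Suc: "GG (Suc k) D = D + GG k ((D + 1) div 2)"
  unfolding GG_def sum.lessThan_Suc_shift div_step by simp

definition proj :: "bool list \<Rightarrow> bool list \<Rightarrow> bool list" where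
  "proj c x = map fst (filter (\<lambda>p. \<not> snd p) (zip x c))"

lemma proj_Cons[simp]: "proj (b # c) (a # x) = (if b then proj c x else a # proj c x)"
  by (simp add: proj_def)

lemma length_proj: "length x = length c \<Longrightarrow> length (proj c x) = length c - wt c"
proof (induction x c rule: list_induct2)
  case Nil then show ?case by (simp add: proj_def wt_def)
next
  case (Cons a x b c)
  have "length (filter id c) \<le> length c" by (rule length_filter_le)
  with Cons show ?case by (auto simp: wt_def Suc_diff_le)
qed

lemma proj_vadd: "length x = length c \<Longrightarrow> length y = length c \<Longrightarrow> proj c (vadd x y) = vadd (proj c x) (proj c y)"
proof (induction x c arbitrary: y rule: list_induct2)
  case Nil then show ?case by (simp add: proj_def)
next
  case (Cons a x b c) then show ?case by (cases y) auto
qed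

lemma proj_zero: "length c = n \<Longrightarrow> proj c (zv n) = zv (n - wt c)"
  by (induction c arbitrary: n) (auto simp: proj_def wt_def Suc_diff_le length_filter_le)

definition cS :: "bool list \<Rightarrow> bool list \<Rightarrow> nat" where
  "cS c x = length (filter (\<lambda>p. fst p \<and> snd p) (zip x c))"

lemma cS_Cons[simp]: "cS (b # c) (a # x) = (if a \<and> b then Suc (cS c x) else cS c x)"
  by (simp add: cS_def)

lemma wt_Cons[simp]: "wt (a # x) = (if a then Suc (wt x) else wt x)"
  by (simp add: wt_def)

lemma wt_Nil[simp]: "wt [] = 0" by (simp add: wt_def)

lemma wt_split: "length x = length c \<Longrightarrow> wt x = wt (proj c x) + cS c x"
  by (induction x c rule: list_induct2) (auto simp: cS_def proj_def)

lemma cS_vadd: "length x = length c \<Longrightarrow> cS c x + cS c (vadd x c) = wt c"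
  by (induction x c rule: list_induct2) (auto simp: cS_def)

lemma proj_vadd_c: "length x = length c \<Longrightarrow> proj c (vadd x c) = proj c x"
  by (induction x c rule: list_induct2) auto


lemma wt_zero_iff: "wt x = 0 \<longleftrightarrow> x = zv (length x)"
  by (induction x) auto

lemma wt_le_length: "wt x \<le> length x"
  unfolding wt_def by (rule length_filter_le)

lemma griesmer:
  assumes "lin_code n k C" and "\<forall>x\<in>C. x \<noteq> zv n \<longrightarrow> wt x \<ge> D"
  shows "n \<ge> GG k D"
  using assms
proof (induction k arbitrary: n C D)
  case 0 then show ?case by (simp add: GG_def)
next
  case (Suc k)
  have len: "\<And>x. x \<in> C \<Longrightarrow> length x = n" and z: "zv n \<in> C"
    and cl: "\<And>x y. x \<in> C \<Longrightarrow> y \<in> C \<Longrightarrow> vadd x y \<in> C" and cC: "card C = 2 ^ Suc k"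
    using Suc.prems(1) unfolding lin_code_def by auto
  have finC: "finite C"
  proof (rule ccontr)
    assume "infinite C" then have "card C = 0" by simp
    with cC show False by simp
  qed
  have "C - {zv n} \<noteq> {}"
  proof
    assume "C - {zv n} = {}"
    then have "C \<subseteq> {zv n}" by auto
    then have "card C \<le> card {zv n}" by (intro card_mono) auto
    then have "card C \<le> 1" by simp
    moreover have "(2::nat) ^ k > 0" by simp
    ultimately show False using cC by simp
  qed
  then obtain c0 where "c0 \<in> C - {zv n}" by blast
  define c where "c = arg_min wt (\<lambda>x. x \<in> C - {zv n})"
  have am: "c \<in> C - {zv n} \<and> (\<forall>y. y \<in> C - {zv n} \<longrightarrow> wt c \<le> wt y)"
    unfolding c_def by (rule arg_min_nat_lemma) (use \<open>c0 \<in> C - {zv n}\<close> in auto)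
  define w where "w = wt c"
  have c: "c \<in> C" "c \<noteq> zv n" "wt c = w" using am w_def by auto
  have minw: "\<And>y. y \<in> C \<Longrightarrow> y \<noteq> zv n \<Longrightarrow> w \<le> wt y" using am w_def by auto
  have lc: "length c = n" using len c by simp
  have wD: "w \<ge> D" using Suc.prems(2) c by auto
  have wn: "w \<le> n" using wt_le_length[of c] lc c by simp
  define C' where "C' = proj c ` C"
  have lenp: "\<And>x. x \<in> C \<Longrightarrow> length (proj c x) = n - w" using length_proj len lc c by simp
  have kernel: "\<And>x. x \<in> C \<Longrightarrow> proj c x = zv (n - w) \<Longrightarrow> x = zv n \<or> x = c"
  proof -
    fix x assume x: "x \<in> C" and px: "proj c x = zv (n - w)"
    show "x = zv n \<or> x = c"
    proof (rule ccontr)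
      assume nx: "\<not> (x = zv n \<or> x = c)"
      have lx: "length x = n" using len x by simp
      have "wt (proj c x) = 0" using px by (simp add: wt_def)
      then have wx: "wt x = cS c x" using wt_split[of x c] lx lc by simp
      have xc: "vadd x c \<in> C" using cl x c by simp
      have "vadd x c \<noteq> zv n" using vadd_eq_zero_iff[of x c] lx lc nx by simp
      then have "w \<le> wt (vadd x c)" using minw xc by simp
      moreover have "wt (vadd x c) = wt (proj c x) + cS c (vadd x c)"
        using wt_split[of "vadd x c" c] proj_vadd_c[of x c] lx lc by simp
      moreover have "cS c x + cS c (vadd x c) = w" using cS_vadd[of x c] lx lc c by simp
      moreover have "w \<le> wt x" using minw x nx by simp
      ultimately have "wt (vadd x c) = 0" using wx \<open>wt (proj c x) = 0\<close> by linarith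
      then have "vadd x c = zv n" using wt_zero_iff[of "vadd x c"] lx lc by simp
      with \<open>vadd x c \<noteq> zv n\<close> show False by simp
    qed
  qed
  have fiber: "\<And>x. x \<in> C \<Longrightarrow> {y\<in>C. proj c y = proj c x} = {x, vadd x c}"
  proof -
    fix x assume x: "x \<in> C"
    have lx: "length x = n" using len x by simp
    show "{y\<in>C. proj c y = proj c x} = {x, vadd x c}"
    proof
      show "{x, vadd x c} \<subseteq> {y\<in>C. proj c y = proj c x}"
        using x cl[OF x c(1)] proj_vadd_c[of x c] lx lc by auto
      show "{y\<in>C. proj c y = proj c x} \<subseteq> {x, vadd x c}"
      proof
        fix y assume y: "y \<in> {y\<in>C. proj c y = proj c x}"
        then have yC: "y \<in> C" and py: "proj c y = proj c x" by auto
        have ly: "length y = n" using len yC by simp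
        have "proj c (vadd x y) = zv (n - w)"
          using proj_vadd[of x c y] lx ly lc py lenp[OF x] by simp
        then have "vadd x y = zv n \<or> vadd x y = c" using kernel cl[OF x yC] by simp
        then show "y \<in> {x, vadd x c}"
        proof
          assume "vadd x y = zv n"
          then have "x = y" using vadd_eq_zero_iff[of x y] lx ly by simp
          then show ?thesis by simp
        next
          assume h: "vadd x y = c"
          have "vadd x (vadd x y) = y" using lx ly by (simp add: vadd_assoc[symmetric])
          then have "y = vadd x c" using h by simp
          then show ?thesis by simp
        qed
      qed
    qed
  qed
  have two: "\<And>x. x \<in> C \<Longrightarrow> card {y\<in>C. proj c y = proj c x} = 2"
  proof -
    fix x assume x: "x \<in> C"
    have lx: "length x = n" using len x by simp
    have "x \<noteq> vadd x c"
    proof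
      assume "x = vadd x c"
      then have "vadd x (vadd x c) = vadd x x" by simp
      then have "c = zv n" using lx lc by (simp add: vadd_assoc[symmetric])
      with c show False by simp
    qed
    then show "card {y\<in>C. proj c y = proj c x} = 2" using fiber[OF x] by simp
  qed
  have "card C = (\<Sum>y\<in>C'. card {x\<in>C. proj c x = y})"
    unfolding C'_def using sum.image_gen[OF finC, of "\<lambda>_. 1::nat" "proj c"] by (simp add: card_eq_sum[symmetric])
  also have "\<dots> = (\<Sum>y\<in>C'. 2)"
  proof (rule sum.cong[OF refl])
    fix y assume "y \<in> C'"
    then obtain x where x: "x \<in> C" "y = proj c x" unfolding C'_def by blast
    then show "card {x\<in>C. proj c x = y} = 2" using two[OF x(1)] by simp
  qed
  also have "\<dots> = 2 * card C'" by simp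
  finally have cC': "card C' = 2 ^ k" using cC by simp
  have lin': "lin_code (n - w) k C'"
    unfolding lin_code_def
  proof (intro conjI ballI)
    show "length x = n - w" if "x \<in> C'" for x using that lenp unfolding C'_def by auto
    show "zv (n - w) \<in> C'"
    proof -
      have "zv (n - w) = proj c (zv n)" using proj_zero[OF lc] c by simp
      then show ?thesis using z unfolding C'_def by blast
    qed
    show "vadd x y \<in> C'" if xy: "x \<in> C'" "y \<in> C'" for x y
    proof -
      obtain a b where ab: "a \<in> C" "b \<in> C" "x = proj c a" "y = proj c b" using xy unfolding C'_def by blast
      then have "vadd x y = proj c (vadd a b)" using proj_vadd len lc by simp
      then show ?thesis unfolding C'_def using cl ab by auto
    qed
    show "card C' = 2 ^ k" by (rule cC')
  qed
  have wt': "\<forall>y\<in>C'. y \<noteq> zv (n - w) \<longrightarrow> wt y \<ge> (D + 1) div 2"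
  proof (intro ballI impI)
    fix y assume y: "y \<in> C'" and ny: "y \<noteq> zv (n - w)"
    obtain x where x: "x \<in> C" "y = proj c x" using y unfolding C'_def by blast
    have lx: "length x = n" using len x by simp
    have xnz: "x \<noteq> zv n" using x ny proj_zero[OF lc] c by auto
    have "x \<noteq> c"
    proof
      assume "x = c"
      then have "proj c x = proj c (vadd (zv n) c)" using lc by simp
      also have "\<dots> = proj c (zv n)" using proj_vadd_c[of "zv n" c] lc by simp
      finally show False using x ny proj_zero[OF lc] c by simp
    qed
    then have xc: "vadd x c \<noteq> zv n" using vadd_eq_zero_iff[of x c] lx lc by simp
    have "w \<le> wt x" using minw x(1) xnz by simp
    moreover have "w \<le> wt (vadd x c)" using minw cl[OF x(1) c(1)] xc by simp
    moreover have "wt x = wt y + cS c x" using wt_split[of x c] lx lc x by simp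
    moreover have "wt (vadd x c) = wt y + cS c (vadd x c)"
      using wt_split[of "vadd x c" c] proj_vadd_c[of x c] lx lc x by simp
    moreover have "cS c x + cS c (vadd x c) = w" using cS_vadd[of x c] lx lc c by simp
    ultimately have "2 * wt y \<ge> w" by linarith
    then show "wt y \<ge> (D + 1) div 2" using wD by linarith
  qed
  have "n - w \<ge> GG k ((D + 1) div 2)" using Suc.IH[OF lin' wt'] .
  then show ?case using GG_Suc[of k D] wD wn by linarith
qed

lemma F2_cases: "(a::F2) = 0 \<or> a = 1"
proof -
  obtain i where i: "i < CARD(bool)" "a = of_nat i" using surj_of_nat_mod_ring[of a] by blast
  then have "i < 2" by simp
  then have "i = 0 \<or> i = 1" by arith
  with i show ?thesis by auto
qed

lemma one_plus_one_F2: "(1::F2) + 1 = 0"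
  using two_F2 by (simp add: one_add_one)

definition b2f :: "bool \<Rightarrow> F2" where "b2f b = (if b then 1 else 0)"

definition to_poly :: "bool list \<Rightarrow> F2 poly" where
  "to_poly xs = Poly (map b2f xs)"

definition of_poly :: "nat \<Rightarrow> F2 poly \<Rightarrow> bool list" where
  "of_poly k p = map (\<lambda>i. coeff p i = 1) [0..<k]"

lemma coeff_to_poly: "coeff (to_poly xs) i = (if i < length xs \<and> xs ! i then 1 else 0)"
  unfolding to_poly_def coeff_Poly by (auto simp: nth_default_def b2f_def)

lemma to_poly_vadd: "length x = length y \<Longrightarrow> to_poly (vadd x y) = to_poly x + to_poly y"
  by (rule poly_eqI) (auto simp: coeff_to_poly vadd_def one_plus_one_F2 two_F2)

lemma to_poly_zero[simp]: "to_poly (zv n) = 0"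
  by (rule poly_eqI) (simp add: coeff_to_poly)

lemma length_of_poly[simp]: "length (of_poly k p) = k"
  by (simp add: of_poly_def)

lemma of_poly_to_poly: "of_poly (length x) (to_poly x) = x"
  by (rule nth_equalityI) (auto simp: of_poly_def coeff_to_poly)

lemma to_poly_inj: "length x = length y \<Longrightarrow> to_poly x = to_poly y \<Longrightarrow> x = y"
  by (metis of_poly_to_poly)

lemma to_poly_eq_0: "to_poly x = 0 \<Longrightarrow> x = zv (length x)"
  using to_poly_inj[of x "zv (length x)"] by simp

lemma degree_to_poly: "length x = k \<Longrightarrow> k \<ge> 1 \<Longrightarrow> degree (to_poly x) \<le> k - 1"
  by (rule degree_le) (auto simp: coeff_to_poly)

lemma to_poly_of_poly: 
  assumes "k \<ge> 1" "degree p \<le> k - 1" shows "to_poly (of_poly k p) = p"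
proof (rule poly_eqI)
  fix i
  show "coeff (to_poly (of_poly k p)) i = coeff p i"
  proof (cases "i < k")
    case True
    then show ?thesis using F2_cases[of "coeff p i"] by (auto simp: coeff_to_poly of_poly_def)
  next
    case False
    then have "coeff p i = 0" using assms by (intro coeff_eq_0) auto
    then show ?thesis using False by (simp add: coeff_to_poly)
  qed
qed

definition VR :: "nat \<Rightarrow> F2 poly \<Rightarrow> bool list set" where
  "VR k R = {x \<in> Vk k. R dvd to_poly x}"

lemma subsp_VR: "subsp k (VR k R)"
  unfolding subsp_def VR_def Vk_def
  by (auto simp: to_poly_vadd)

lemma card_VR:
  assumes R: "R \<noteq> 0" and d: "degree R < k"
  shows "card (VR k R) = 2 ^ (k - degree R)"
proof -
  let ?d = "degree R"
  define h where "h y = of_poly k (R * to_poly y)" for y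
  have k1: "k \<ge> 1" using d by simp
  have "bij_betw h (Vk (k - ?d)) (VR k R)"
  proof (rule bij_betw_imageI)
    show "inj_on h (Vk (k - ?d))"
    proof (rule inj_onI)
      fix y1 y2 assume y: "y1 \<in> Vk (k - ?d)" "y2 \<in> Vk (k - ?d)" and e: "h y1 = h y2"
      have dg: "degree (R * to_poly y) \<le> k - 1" if "y \<in> Vk (k - ?d)" for y
      proof (cases "to_poly y = 0")
        case True then show ?thesis by simp
      next
        case False
        have "degree (to_poly y) \<le> k - ?d - 1" using degree_to_poly[of y "k - ?d"] that d unfolding Vk_def by simp
        then show ?thesis using False R d by (simp add: degree_mult_eq)
      qed
      have "R * to_poly y1 = R * to_poly y2"
        using e to_poly_of_poly[OF k1 dg[OF y(1)]] to_poly_of_poly[OF k1 dg[OF y(2)]] unfolding h_def by metis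
      then have "to_poly y1 = to_poly y2" using R by simp
      then show "y1 = y2" using to_poly_inj y unfolding Vk_def by auto
    qed
    show "h ` Vk (k - ?d) = VR k R"
    proof
      show "h ` Vk (k - ?d) \<subseteq> VR k R"
      proof
        fix x assume "x \<in> h ` Vk (k - ?d)"
        then obtain y where y: "y \<in> Vk (k - ?d)" "x = h y" by blast
        have dg: "degree (R * to_poly y) \<le> k - 1"
        proof (cases "to_poly y = 0")
          case True then show ?thesis by simp
        next
          case False
          have "degree (to_poly y) \<le> k - ?d - 1" using degree_to_poly[of y "k - ?d"] y d unfolding Vk_def by simp
          then show ?thesis using False R d by (simp add: degree_mult_eq)
        qed
        have "to_poly x = R * to_poly y" using to_poly_of_poly[OF k1 dg] y unfolding h_def by simp
        then show "x \<in> VR k R" unfolding VR_def Vk_def using y by (simp add: h_def)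
      qed
      show "VR k R \<subseteq> h ` Vk (k - ?d)"
      proof
        fix x assume x: "x \<in> VR k R"
        then have lx: "length x = k" and dv: "R dvd to_poly x" unfolding VR_def Vk_def by auto
        obtain q where q: "to_poly x = R * q" using dv by (elim dvdE)
        have dq: "degree q \<le> k - ?d - 1"
        proof (cases "q = 0")
          case True then show ?thesis by simp
        next
          case False
          have "degree (to_poly x) \<le> k - 1" using degree_to_poly[OF lx k1] .
          then show ?thesis using q False R by (simp add: degree_mult_eq)
        qed
        have kd: "k - ?d \<ge> 1" using d by simp
        define y where "y = of_poly (k - ?d) q"
        have y: "y \<in> Vk (k - ?d)" unfolding y_def Vk_def by simp
        have "to_poly y = q" unfolding y_def using to_poly_of_poly[OF kd dq] .
        then have "h y = of_poly k (to_poly x)" unfolding h_def using q by simp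
        also have "\<dots> = x" using of_poly_to_poly[of x] lx by simp
        finally show "x \<in> h ` Vk (k - ?d)" using y by (metis image_eqI)
      qed
    qed
  qed
  then have "card (Vk (k - ?d)) = card (VR k R)" by (rule bij_betw_same_card)
  then show ?thesis by simp
qed

lemma irreducible_coprime_degree:
  fixes p q :: "F2 poly"
  assumes p: "irreducible p" and q: "irreducible q" and d: "degree p \<noteq> degree q"
  shows "algebraic_semidom_class.coprime p q"
proof (rule algebraic_semidom_class.coprimeI)
  fix c assume cp: "c dvd p" and cq: "c dvd q"
  show "is_unit c"
  proof (rule ccontr)
    assume nu: "\<not> is_unit c"
    have eqdeg: "degree r = degree c" if r: "irreducible r" "c dvd r" for r
    proof -
      obtain e where e: "r = c * e" using r(2) by (elim dvdE)
      then have "is_unit e" using irreducibleD[OF r(1) e] nu by auto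
      moreover have "c \<noteq> 0" using e r(1) by auto
      ultimately show ?thesis using e by (simp add: degree_mult_eq is_unit_iff_degree)
    qed
    have "degree p = degree c" by (rule eqdeg[OF p cp])
    moreover have "degree q = degree c" by (rule eqdeg[OF q cq])
    ultimately show False using d by simp
  qed
qed

lemma prod_dvd_coprime:
  fixes R :: "nat \<Rightarrow> F2 poly"
  assumes "finite S" "\<And>i j. i \<in> S \<Longrightarrow> j \<in> S \<Longrightarrow> i \<noteq> j \<Longrightarrow> algebraic_semidom_class.coprime (R i) (R j)"
    "\<And>i. i \<in> S \<Longrightarrow> R i dvd x"
  shows "(\<Prod>i\<in>S. R i) dvd x"
  using assms
proof (induction S rule: finite_induct)
  case empty then show ?case by simp
next
  case (insert a S)
  have "\<forall>i\<in>S. algebraic_semidom_class.coprime (R a) (R i)" using insert.prems(1) insert.hyps(2) by (metis insertCI)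
  then have "algebraic_semidom_class.coprime (R a) (\<Prod>i\<in>S. R i)" by (intro prod_coprime_right) auto
  moreover have "(\<Prod>i\<in>S. R i) dvd x" using insert by auto
  moreover have "R a dvd x" using insert by auto
  ultimately show ?case using insert by (simp add: divides_mult)
qed

lemma sum_distinct_pos:
  fixes S :: "nat set"
  assumes "finite S" "0 \<notin> S"
  shows "card S * (card S + 1) \<le> 2 * (\<Sum>S)"
  using assms
proof (induction "card S" arbitrary: S)
  case 0 then show ?case by simp
next
  case (Suc t)
  then have ne: "S \<noteq> {}" by auto
  define m where "m = Max S"
  have mS: "m \<in> S" unfolding m_def using Suc ne by simp
  have "S \<subseteq> {1..m}"
  proof
    fix x assume x: "x \<in> S"
    have "x \<noteq> 0"
    proof
      assume "x = 0" with x Suc.prems(2) show False by simp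
    qed
    moreover have "x \<le> m" using Max_ge[OF _ x] Suc.prems m_def by simp
    ultimately show "x \<in> {1..m}" by simp
  qed
  then have "card S \<le> m" using card_mono[of "{1..m}" S] by simp
  have ct: "card (S - {m}) = t" using Suc mS by simp
  have IH: "t * (t + 1) \<le> 2 * (\<Sum>(S - {m}))" using Suc.hyps(1)[of "S - {m}"] ct Suc by auto
  have "(\<Sum>S) = m + (\<Sum>(S - {m}))" using Suc mS by (simp add: sum.remove)
  moreover have "card S * (card S + 1) = t * (t + 1) + 2 * card S" using Suc.hyps(2)[symmetric] by simp
  ultimately show ?case using IH \<open>card S \<le> m\<close> by linarith
qed

lemma multiplicity_bound:
  fixes R :: "nat \<Rightarrow> F2 poly"
  assumes C: "finite C" "0 \<notin> C" and irr: "\<And>c. c \<in> C \<Longrightarrow> irreducible (R c) \<and> degree (R c) = c"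
    and x: "x \<in> Vk k" "x \<noteq> zv k" and k1: "k \<ge> 1"
  shows "card {c\<in>C. x \<in> VR k (R c)} * (card {c\<in>C. x \<in> VR k (R c)} + 1) \<le> 2 * (k - 1)"
proof -
  let ?S = "{c\<in>C. x \<in> VR k (R c)}"
  have fS: "finite ?S" using C by simp
  have lx: "length x = k" using x unfolding Vk_def by simp
  have "(\<Prod>c\<in>?S. R c) dvd to_poly x"
  proof (rule prod_dvd_coprime[OF fS])
    show "\<And>i j. i \<in> ?S \<Longrightarrow> j \<in> ?S \<Longrightarrow> i \<noteq> j \<Longrightarrow> algebraic_semidom_class.coprime (R i) (R j)"
      using irr irreducible_coprime_degree by auto
    show "\<And>i. i \<in> ?S \<Longrightarrow> R i dvd to_poly x" unfolding VR_def by auto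
  qed
  moreover have nz: "to_poly x \<noteq> 0" using to_poly_eq_0[of x] x lx by auto
  ultimately have "degree (\<Prod>c\<in>?S. R c) \<le> degree (to_poly x)" by (rule dvd_imp_degree_le)
  also have "\<dots> \<le> k - 1" using degree_to_poly[OF lx k1] .
  finally have a: "degree (\<Prod>c\<in>?S. R c) \<le> k - 1" .
  have "degree (\<Prod>c\<in>?S. R c) = (\<Sum>c\<in>?S. degree (R c))"
    using irr by (intro degree_prod_eq_sum_degree) auto
  also have "\<dots> = (\<Sum>c\<in>?S. c)" using irr by (intro sum.cong) auto
  finally have "(\<Sum>?S) \<le> k - 1" using a by simp
  moreover have "card ?S * (card ?S + 1) \<le> 2 * (\<Sum>?S)" using sum_distinct_pos[OF fS] C by auto
  ultimately show ?thesis by linarith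
qed

lemma ceil_div_nat: "nat \<lceil>real d / 2 ^ i\<rceil> = (d + 2 ^ i - 1) div 2 ^ i"
proof -
  define b :: nat where "b = 2 ^ i"
  have b: "b \<ge> 1" unfolding b_def by simp
  define q where "q = (d + b - 1) div b"
  have dm: "q * b + (d + b - 1) mod b = d + b - 1" unfolding q_def by (rule div_mult_mod_eq)
  have ml: "(d + b - 1) mod b < b" using b by simp
  have q1: "q * b + 1 \<le> d + b" using dm b by linarith
  have q2: "d \<le> q * b" using dm ml b by linarith
  have r1: "real q * real b + 1 \<le> real d + real b"
  proof -
    have "real (q * b + 1) \<le> real (d + b)" using q1 by (simp only: of_nat_le_iff)
    then show ?thesis by simp
  qed
  have r2: "real d \<le> real q * real b"
  proof -
    have "real d \<le> real (q * b)" using q2 by (simp only: of_nat_le_iff)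
    then show ?thesis by simp
  qed
  have bpos: "real b > 0" using b by simp
  have "\<lceil>real d / real b\<rceil> = int q"
  proof (rule ceiling_unique)
    show "real d / real b \<le> real_of_int (int q)"
      using r2 bpos by (simp add: divide_le_eq)
    show "real_of_int (int q) - 1 < real d / real b"
    proof -
      have "(real q - 1) * real b < real d" using r1 b by (simp add: algebra_simps)
      then show ?thesis using bpos by (simp add: less_divide_eq)
    qed
  qed
  then show ?thesis unfolding b_def q_def by simp
qed

lemma g_eq_GG: "g k d = GG k d"
  unfolding g_def GG_def by (simp add: ceil_div_nat)

lemma GG_shift: "GG k (m * 2 ^ (k - 1) + e) = m * (2 ^ k - 1) + GG k e"
proof -
  have t: "(m * 2 ^ (k - 1) + e + 2 ^ i - 1) div 2 ^ i = m * 2 ^ (k - 1 - i) + (e + 2 ^ i - 1) div 2 ^ i"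
    if "i < k" for i
  proof -
    have pk: "m * 2 ^ (k - 1) = (m * 2 ^ (k - 1 - i)) * 2 ^ i" using that
      by (simp add: power_add[symmetric] mult.assoc)
    have p1: "(2::nat) ^ i \<ge> 1" by simp
    have "m * 2 ^ (k - 1) + e + 2 ^ i - 1 = (e + 2 ^ i - 1) + m * 2 ^ (k - 1)" using p1 by linarith
    also have "\<dots> = (e + 2 ^ i - 1) + (m * 2 ^ (k - 1 - i)) * 2 ^ i" using pk by simp
    finally show ?thesis by simp
  qed
  have s: "(\<Sum>i<k. (2::nat) ^ (k - 1 - i)) = 2 ^ k - 1"
  proof -
    have "(\<Sum>i<k. (2::nat) ^ (k - 1 - i)) = (\<Sum>i<k. 2 ^ i)"
      by (rule sum.reindex_bij_witness[of _ "\<lambda>i. k - 1 - i" "\<lambda>i. k - 1 - i"]) auto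
    also have "\<dots> = 2 ^ k - 1" by (induction k) auto
    finally show ?thesis .
  qed
  have "GG k (m * 2 ^ (k - 1) + e) = (\<Sum>i<k. m * 2 ^ (k - 1 - i) + (e + 2 ^ i - 1) div 2 ^ i)"
    unfolding GG_def by (rule sum.cong[OF refl]) (rule t, simp)
  also have "\<dots> = m * (\<Sum>i<k. 2 ^ (k - 1 - i)) + GG k e"
    unfolding GG_def by (simp add: sum.distrib sum_distrib_left)
  finally show ?thesis using s by simp
qed

definition FF :: "nat \<Rightarrow> nat \<Rightarrow> nat" where "FF K n = (\<Sum>i<K. n div 2 ^ i)"

definition BB :: "nat \<Rightarrow> nat \<Rightarrow> nat set" where "BB K n = {j. j < K \<and> odd (n div 2 ^ j)}"

lemma BB_Suc: "BB (Suc K) n = (if odd n then {0} else {}) \<union> Suc ` BB K (n div 2)"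
proof -
  have "j \<in> BB (Suc K) n \<longleftrightarrow> j \<in> (if odd n then {0} else {}) \<union> Suc ` BB K (n div 2)" for j
  proof (cases j)
    case 0 then show ?thesis by (auto simp: BB_def)
  next
    case (Suc j')
    have "n div 2 ^ Suc j' = n div 2 div 2 ^ j'" by (simp add: div_mult2_eq)
    then show ?thesis using Suc by (auto simp: BB_def)
  qed
  then show ?thesis by blast
qed

lemma binary_facts: "n < 2 ^ K \<Longrightarrow> n = (\<Sum>j\<in>BB K n. 2 ^ j) \<and> FF K n + card (BB K n) = 2 * n"
proof (induction K arbitrary: n)
  case 0 then show ?case by (simp add: BB_def FF_def)
next
  case (Suc K)
  let ?n = "n div 2"
  have lt: "?n < 2 ^ K" using Suc.prems by simp
  from Suc.IH[OF lt] have ih1: "?n = (\<Sum>j\<in>BB K ?n. 2 ^ j)" and ih2: "FF K ?n + card (BB K ?n) = 2 * ?n" by auto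
  have fin: "finite (BB K ?n)" unfolding BB_def by simp
  have disj: "0 \<notin> Suc ` BB K ?n" by auto
  have s1: "(\<Sum>j\<in>Suc ` BB K ?n. (2::nat) ^ j) = 2 * ?n"
  proof -
    have "(\<Sum>j\<in>Suc ` BB K ?n. (2::nat) ^ j) = (\<Sum>j\<in>BB K ?n. 2 ^ Suc j)" by (simp add: sum.reindex)
    also have "\<dots> = 2 * (\<Sum>j\<in>BB K ?n. 2 ^ j)" by (simp add: sum_distrib_left)
    finally show ?thesis using ih1 by simp
  qed
  have c1: "card (Suc ` BB K ?n) = card (BB K ?n)" by (simp add: card_image)
  have F: "FF (Suc K) n = n + FF K ?n"
    unfolding FF_def by (simp add: sum.lessThan_Suc_shift div_mult2_eq del: sum.lessThan_Suc)
  show ?case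
  proof (cases "odd n")
    case True
    have B: "BB (Suc K) n = insert 0 (Suc ` BB K ?n)" using BB_Suc[of K n] True by auto
    have "(\<Sum>j\<in>BB (Suc K) n. (2::nat) ^ j) = 1 + 2 * ?n" unfolding B using fin disj s1 by simp
    moreover have "card (BB (Suc K) n) = 1 + card (BB K ?n)" unfolding B using fin disj c1 by simp
    moreover have "n = 1 + 2 * ?n" using True by presburger
    ultimately show ?thesis using F ih2 by simp
  next
    case False
    have B: "BB (Suc K) n = Suc ` BB K ?n" using BB_Suc[of K n] False by auto
    have "n = 2 * ?n" using False by presburger
    then show ?thesis using F ih2 s1 c1 unfolding B by simp
  qed
qed

lemma GG_comp: 
  assumes "s \<le> 2 ^ (k - 1)" "k \<ge> 1"
  shows "GG k (2 ^ (k - 1) - s) + FF k s = 2 ^ k - 1"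
proof -
  have t: "(2 ^ (k - 1) - s + 2 ^ i - 1) div 2 ^ i + s div 2 ^ i = 2 ^ (k - 1 - i)" if i: "i < k" for i
  proof -
    define a where "a = s div 2 ^ i"
    define b where "b = s mod 2 ^ i"
    have sab: "s = a * 2 ^ i + b" unfolding a_def b_def by (metis div_mult_mod_eq)
    have bl: "b < 2 ^ i" unfolding b_def by simp
    define P :: nat where "P = 2 ^ (k - 1 - i)"
    have pk: "(2::nat) ^ (k - 1) = P * 2 ^ i" unfolding P_def using i by (simp add: power_add[symmetric])
    have "a * 2 ^ i \<le> P * 2 ^ i" using assms(1) sab pk by linarith
    then have al: "a \<le> P" using mult_le_cancel2[of a "2 ^ i" P] by simp
    have pa: "(P - a) * 2 ^ i + a * 2 ^ i = P * 2 ^ i" using al by (simp add: add_mult_distrib[symmetric])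
    have sl: "s \<le> P * 2 ^ i" using assms(1) pk by simp
    have p1: "(2::nat) ^ i \<ge> 1" by simp
    have "2 ^ (k - 1) - s + 2 ^ i - 1 = (P - a) * 2 ^ i + (2 ^ i - 1 - b)"
      using pk pa sl sab bl p1 by linarith
    moreover have "2 ^ i - 1 - b < 2 ^ i" by simp
    ultimately have "(2 ^ (k - 1) - s + 2 ^ i - 1) div 2 ^ i = P - a" by simp
    then show ?thesis using al unfolding a_def P_def by simp
  qed
  have "GG k (2 ^ (k - 1) - s) + FF k s = (\<Sum>i<k. (2 ^ (k - 1) - s + 2 ^ i - 1) div 2 ^ i + s div 2 ^ i)"
    unfolding GG_def FF_def by (simp add: sum.distrib)
  also have "\<dots> = (\<Sum>i<k. 2 ^ (k - 1 - i))" by (rule sum.cong[OF refl]) (rule t, simp)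
  also have "\<dots> = (\<Sum>i<k. (2::nat) ^ i)"
    by (rule sum.reindex_bij_witness[of _ "\<lambda>i. k - 1 - i" "\<lambda>i. k - 1 - i"]) auto
  also have "\<dots> = 2 ^ k - 1" by (induction k) auto
  finally show ?thesis .
qed

lemma threshold:
  fixes k m :: nat
  assumes k5: "k \<ge> 5"
    and h: "int m \<ge> min \<lceil>(real k + 2) * (real k - 3) / (2 * real k)\<rceil>
                      \<lceil>sqrt (2 * real k + 1/4) - 3/2\<rceil> - 1"
  shows "m \<ge> 1 \<and> (\<forall>t. t * (t + 1) \<le> 2 * (k - 1) \<longrightarrow> t \<le> m + 1)"
proof -
  have kpos: "real k > 0" using k5 by simp
  have "\<lceil>(real k + 2) * (real k - 3) / (2 * real k)\<rceil> \<le> int m + 1 \<or> \<lceil>sqrt (2 * real k + 1/4) - 3/2\<rceil> \<le> int m + 1"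
    using h by linarith
  then show ?thesis
  proof
    assume "\<lceil>(real k + 2) * (real k - 3) / (2 * real k)\<rceil> \<le> int m + 1"
    then have "(real k + 2) * (real k - 3) / (2 * real k) \<le> real m + 1"
      by (simp add: ceiling_le_iff)
    then have "(real k + 2) * (real k - 3) \<le> (real m + 1) * (2 * real k)"
      using kpos by (simp add: divide_le_eq)
    then have "real (k * k) \<le> real (k + 6 + 2 * k * (m + 1))"
      by (simp add: algebra_simps)
    then have A: "k * k \<le> k + 6 + 2 * k * (m + 1)" by (simp only: of_nat_le_iff)
    have H: "k \<le> 2 * (m + 1) + 2"
    proof (rule ccontr)
      assume "\<not> ?thesis"
      then have "2 * (m + 1) + 3 \<le> k" by simp
      then have "k * (2 * (m + 1) + 3) \<le> k * k" by (rule mult_le_mono2)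
      moreover have "k * (2 * (m + 1) + 3) = 2 * k * (m + 1) + 3 * k" by (simp add: algebra_simps)
      ultimately show False using A k5 by linarith
    qed
    have m1: "m \<ge> 1"
    proof (rule ccontr)
      assume "\<not> ?thesis"
      then have "m = 0" by simp
      then have "k \<le> 4" using H by simp
      with k5 show False by simp
    qed
    have "t \<le> m + 1" if t: "t * (t + 1) \<le> 2 * (k - 1)" for t
    proof (rule ccontr)
      assume "\<not> ?thesis"
      then have "m + 2 \<le> t" by simp
      then have "(m + 2) * (m + 3) \<le> t * (t + 1)" by (intro mult_le_mono) auto
      moreover have "(m + 2) * (m + 3) = m * m + 5 * m + 6" by (simp add: algebra_simps)
      ultimately have "m * m + 5 * m + 6 \<le> 2 * (k - 1)" using t by linarith
      moreover have "2 * (k - 1) \<le> 4 * m + 6" using H by simp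
      ultimately have "m * m + m \<le> 0" by linarith
      then show False using m1 by simp
    qed
    then show ?thesis using m1 by blast
  next
    assume "\<lceil>sqrt (2 * real k + 1/4) - 3/2\<rceil> \<le> int m + 1"
    then have "sqrt (2 * real k + 1/4) - 3/2 \<le> real m + 1" by (simp add: ceiling_le_iff)
    then have "sqrt (2 * real k + 1/4) \<le> real m + 5/2" by simp
    then have "2 * real k + 1/4 \<le> (real m + 5/2)^2"
      by (metis real_le_rsqrt real_sqrt_le_iff sqrt_le_D)
    then have "real (8 * k) \<le> real (4 * (m * m) + 20 * m + 24)"
      by (simp add: power2_eq_square algebra_simps)
    then have B: "8 * k \<le> 4 * (m * m) + 20 * m + 24" by (simp only: of_nat_le_iff)
    have m1: "m \<ge> 1"
    proof (rule ccontr)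
      assume "\<not> ?thesis"
      then have "m = 0" by simp
      with B k5 show False by simp
    qed
    have "t \<le> m + 1" if t: "t * (t + 1) \<le> 2 * (k - 1)" for t
    proof (rule ccontr)
      assume "\<not> ?thesis"
      then have "m + 2 \<le> t" by simp
      then have "(m + 2) * (m + 3) \<le> t * (t + 1)" by (intro mult_le_mono) auto
      moreover have "(m + 2) * (m + 3) = m * m + 5 * m + 6" by (simp add: algebra_simps)
      ultimately show False using t B k5 by linarith
    qed
    then show ?thesis using m1 by blast
  qed
qed

lemma s_decomp:
  assumes k5: "k \<ge> 5" and s4: "s mod 4 = 2" and sl: "s < 2 ^ (k - 1)"
  shows "\<exists>C. C \<subseteq> {1..k-3} \<and> s = 2 + (\<Sum>c\<in>C. 2 ^ (k - 1 - c)) \<and> FF k s = 3 + (\<Sum>c\<in>C. 2 ^ (k - c) - 1)"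
proof -
  have slk: "s < 2 ^ k" using sl by (metis le_less_trans less_imp_le_nat diff_le_self power_increasing_iff one_less_numeral_iff semiring_norm(76) order.strict_trans2 power_increasing one_le_numeral)
  let ?B = "BB k s"
  from binary_facts[OF slk] have b1: "s = (\<Sum>j\<in>?B. 2 ^ j)" and b2: "FF k s + card ?B = 2 * s" by auto
  have finB: "finite ?B" unfolding BB_def by simp
  have n0: "0 \<notin> ?B" using s4 unfolding BB_def by (auto, presburger)
  have i1: "1 \<in> ?B"
  proof -
    have "odd (s div 2)" using s4 by presburger
    then show ?thesis unfolding BB_def using k5 by simp
  qed
  have nk: "k - 1 \<notin> ?B" using sl unfolding BB_def by simp
  define J where "J = ?B - {1}"
  have BJ: "?B = insert 1 J" unfolding J_def using i1 by auto
  have finJ: "finite J" unfolding J_def using finB by simp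
  have J1: "1 \<notin> J" unfolding J_def by simp
  have Jr: "J \<subseteq> {2..k-2}"
  proof
    fix j assume j: "j \<in> J"
    then have "j \<in> ?B" "j \<noteq> 1" unfolding J_def by auto
    moreover have "j \<noteq> 0"
    proof
      assume "j = 0" with n0 \<open>j \<in> ?B\<close> show False by simp
    qed
    moreover have "j < k" using \<open>j \<in> ?B\<close> unfolding BB_def by simp
    moreover have "j \<noteq> k - 1" using nk \<open>j \<in> ?B\<close> by auto
    ultimately show "j \<in> {2..k-2}" by simp
  qed
  define C where "C = (\<lambda>j. k - 1 - j) ` J"
  have inj: "inj_on (\<lambda>j. k - 1 - j) J"
  proof (rule inj_onI)
    fix x y assume x: "x \<in> J" and y: "y \<in> J" and e: "k - 1 - x = k - 1 - y"
    have "x \<le> k - 2" using subsetD[OF Jr x] by simp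
    moreover have "y \<le> k - 2" using subsetD[OF Jr y] by simp
    ultimately show "x = y" using e k5 by linarith
  qed
  have Jb: "2 \<le> j \<and> j \<le> k - 2" if "j \<in> J" for j using subsetD[OF Jr that] by simp
  have Cr: "C \<subseteq> {1..k-3}"
  proof
    fix c assume "c \<in> C"
    then obtain j where j: "j \<in> J" "c = k - 1 - j" unfolding C_def by blast
    have "1 \<le> c" "c \<le> k - 3" using Jb[OF j(1)] k5 j(2) by linarith+
    then show "c \<in> {1..k-3}" by simp
  qed
  have sumC1: "(\<Sum>c\<in>C. (2::nat) ^ (k - 1 - c)) = (\<Sum>j\<in>J. 2 ^ j)"
    unfolding C_def
  proof (subst sum.reindex[OF inj], rule sum.cong[OF refl])
    fix j assume "j \<in> J"
    then have "k - 1 - (k - 1 - j) = j" using Jb k5 by force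
    then show "((\<lambda>c. (2::nat) ^ (k - 1 - c)) \<circ> (\<lambda>j. k - 1 - j)) j = 2 ^ j" by simp
  qed
  have sumC2: "(\<Sum>c\<in>C. (2::nat) ^ (k - c) - 1) = (\<Sum>j\<in>J. 2 ^ (j + 1) - 1)"
    unfolding C_def
  proof (subst sum.reindex[OF inj], rule sum.cong[OF refl])
    fix j assume "j \<in> J"
    then have "k - (k - 1 - j) = j + 1" using Jb k5 by force
    then show "((\<lambda>c. (2::nat) ^ (k - c) - 1) \<circ> (\<lambda>j. k - 1 - j)) j = 2 ^ (j + 1) - 1" by simp
  qed
  have s_eq: "s = 2 + (\<Sum>j\<in>J. 2 ^ j)" using b1 unfolding BJ using finJ J1 by simp
  have cB: "card ?B = 1 + card J" unfolding BJ using finJ J1 by simp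
  have pw: "(\<Sum>j\<in>J. (2::nat) ^ (j + 1) - 1) + card J = 2 * (\<Sum>j\<in>J. 2 ^ j)"
  proof -
    have "(\<Sum>j\<in>J. (2::nat) ^ (j + 1) - 1) + card J = (\<Sum>j\<in>J. (2 ^ (j + 1) - 1) + 1)"
      by (simp only: sum.distrib card_eq_sum)
    also have "\<dots> = (\<Sum>j\<in>J. 2 * 2 ^ j)" by (rule sum.cong) auto
    also have "\<dots> = 2 * (\<Sum>j\<in>J. 2 ^ j)" by (simp add: sum_distrib_left)
    finally show ?thesis .
  qed
  have "FF k s = 3 + (\<Sum>j\<in>J. 2 ^ (j + 1) - 1)" using b2 cB s_eq pw by linarith
  then show ?thesis using Cr s_eq sumC1 sumC2 by auto
qed

definition p0 :: "nat \<Rightarrow> bool list" where "p0 k = True # zv (k - 1)"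

lemma p0_Vk: "k \<ge> 1 \<Longrightarrow> p0 k \<in> Vk k" unfolding p0_def Vk_def by simp

lemma p0_nz: "k \<ge> 1 \<Longrightarrow> p0 k \<noteq> zv k" unfolding p0_def by (cases k) auto

lemma to_poly_p0: "to_poly (p0 k) = 1"
  by (rule poly_eqI) (auto simp: coeff_to_poly p0_def nth_Cons' coeff_1)

lemma p0_notin: 
  assumes "irreducible R" "degree R \<ge> 1"
  shows "p0 k \<notin> VR k R"
proof
  assume "p0 k \<in> VR k R"
  then have "R dvd 1" unfolding VR_def using to_poly_p0 by simp
  then have "is_unit R" by simp
  then have "degree R = 0" by (simp add: is_unit_iff_degree)
  with assms show False by simp
qed

lemma sum_split_zero:
  assumes "\<not> P (zv k)"
  shows "(\<Sum>x\<in>Vk k. if P x then f x else 0) = (\<Sum>x\<in>Vk k - {zv k}. if P x then f x else (0::nat))"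
proof -
  have z: "zv k \<in> Vk k" unfolding Vk_def by simp
  show ?thesis using sum.remove[OF finite_Vk z, of "\<lambda>x. if P x then f x else 0"] assms by simp
qed

lemma sum_minus_nat:
  assumes "finite A" "\<And>x. x \<in> A \<Longrightarrow> h x \<le> (M::nat)"
  shows "(\<Sum>x\<in>A. if P x then M - h x else 0) + (\<Sum>x\<in>A. if P x then h x else 0) = M * card {x\<in>A. P x}"
proof -
  have "(\<Sum>x\<in>A. if P x then M - h x else 0) + (\<Sum>x\<in>A. if P x then h x else 0)
      = (\<Sum>x\<in>A. if P x then M else 0)"
    unfolding sum.distrib[symmetric] using assms(2) by (intro sum.cong) auto
  also have "\<dots> = M * card {x\<in>A. P x}" using assms(1) by (simp add: sum.If_cases Int_def conj_commute)
  finally show ?thesis .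
qed

lemma sum_card_swap:
  assumes "finite A" "finite C"
  shows "(\<Sum>x\<in>A. if P x then card {c\<in>C. x \<in> V c} else 0) = (\<Sum>c\<in>C. card {x\<in>A. P x \<and> x \<in> V c})"
proof -
  have "(\<Sum>x\<in>A. if P x then card {c\<in>C. x \<in> V c} else 0) = (\<Sum>x\<in>A. \<Sum>c\<in>C. if P x \<and> x \<in> V c then 1 else 0)"
    using assms by (intro sum.cong) (auto simp: sum.If_cases Int_def)
  also have "\<dots> = (\<Sum>c\<in>C. \<Sum>x\<in>A. if P x \<and> x \<in> V c then 1 else 0)" by (rule sum.swap)
  also have "\<dots> = (\<Sum>c\<in>C. card {x\<in>A. P x \<and> x \<in> V c})"
    using assms by (intro sum.cong) (auto simp: sum.If_cases Int_def)
  finally show ?thesis .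
qed

context
  fixes k M :: nat and C :: "nat set" and R :: "nat \<Rightarrow> F2 poly"
  assumes k5: "k \<ge> 5" and M2: "M \<ge> 2" and Csub: "C \<subseteq> {1..k-3}"
    and irr: "\<And>c. c \<in> C \<Longrightarrow> irreducible (R c) \<and> degree (R c) = c"
    and mult: "\<And>x. x \<in> Vk k \<Longrightarrow> x \<noteq> zv k \<Longrightarrow> card {c\<in>C. x \<in> VR k (R c)} \<le> M"
begin

definition Xm :: "bool list \<Rightarrow> nat" where
  "Xm x = (if x = p0 k then 2 else 0) + card {c\<in>C. x \<in> VR k (R c)}"

definition LL :: nat where "LL = (\<Sum>x\<in>Vk k - {zv k}. M - Xm x)"

definition ff :: "nat \<Rightarrow> bool list \<Rightarrow> nat" where
  "ff N x = (if x = zv k then N - LL else M - Xm x)"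

lemma finC: "finite C" using Csub finite_subset by blast

lemma k1: "k \<ge> 1" using k5 by simp

lemma cC: assumes c: "c \<in> C" shows "1 \<le> c" "c \<le> k - 3" "c < k"
proof -
  have "c \<in> {1..k-3}" using subsetD[OF Csub c] .
  then show "1 \<le> c" "c \<le> k - 3" by auto
  then show "c < k" using k5 by linarith
qed

lemma p0_card: "card {c\<in>C. p0 k \<in> VR k (R c)} = 0"
proof -
  have e: "{c\<in>C. p0 k \<in> VR k (R c)} = {}"
  proof (rule ccontr)
    assume "{c\<in>C. p0 k \<in> VR k (R c)} \<noteq> {}"
    then obtain c where c: "c \<in> C" "p0 k \<in> VR k (R c)" by blast
    have "c \<ge> 1" using cC[OF c(1)] by simp
    then show False using p0_notin[of "R c" k] irr[OF c(1)] c(2) by simp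
  qed
  show ?thesis by (simp only: e card.empty)
qed

lemma Xm_le: "x \<in> Vk k - {zv k} \<Longrightarrow> Xm x \<le> M"
proof -
  assume x: "x \<in> Vk k - {zv k}"
  show "Xm x \<le> M"
  proof (cases "x = p0 k")
    case True then show ?thesis unfolding Xm_def using p0_card M2 by simp
  next
    case False then show ?thesis unfolding Xm_def using mult x by simp
  qed
qed

lemma zv_Vk: "zv k \<in> Vk k" unfolding Vk_def by simp

lemma VR_sub: "VR k R' \<subseteq> Vk k" unfolding VR_def by auto

lemma GS:
  assumes nP: "\<not> P (zv k)"
  shows "(\<Sum>x\<in>Vk k. if P x then ff N x else 0) + (if P (p0 k) then 2 else 0)
         + (\<Sum>c\<in>C. cnt (VR k (R c)) P) = M * cnt (Vk k) P"
proof -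
  let ?A = "Vk k - {zv k}"
  have finA: "finite ?A" by simp
  have s1: "(\<Sum>x\<in>Vk k. if P x then ff N x else 0) = (\<Sum>x\<in>?A. if P x then M - Xm x else 0)"
  proof -
    have "(\<Sum>x\<in>Vk k. if P x then ff N x else 0) = (\<Sum>x\<in>?A. if P x then ff N x else 0)"
      by (rule sum_split_zero[where P=P and k=k, OF nP])
    also have "\<dots> = (\<Sum>x\<in>?A. if P x then M - Xm x else 0)" by (intro sum.cong) (auto simp: ff_def)
    finally show ?thesis .
  qed
  have s2: "(\<Sum>x\<in>?A. if P x then M - Xm x else 0) + (\<Sum>x\<in>?A. if P x then Xm x else 0) = M * card {x\<in>?A. P x}"
    by (rule sum_minus_nat[OF finA]) (rule Xm_le)
  have p0A: "p0 k \<in> ?A" using p0_Vk[OF k1] p0_nz[OF k1] by simp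
  have s3: "(\<Sum>x\<in>?A. if P x then Xm x else 0)
      = (\<Sum>x\<in>?A. if P x \<and> x = p0 k then 2 else 0) + (\<Sum>x\<in>?A. if P x then card {c\<in>C. x \<in> VR k (R c)} else 0)"
    unfolding Xm_def sum.distrib[symmetric] by (intro sum.cong) auto
  have s4: "(\<Sum>x\<in>?A. if P x \<and> x = p0 k then 2 else (0::nat)) = (if P (p0 k) then 2 else 0)"
  proof -
    have "(\<Sum>x\<in>?A. if P x \<and> x = p0 k then 2 else (0::nat)) = (\<Sum>x\<in>?A. if x = p0 k then (if P (p0 k) then 2 else 0) else 0)"
      by (intro sum.cong) auto
    also have "\<dots> = (if P (p0 k) then 2 else 0)" using p0A finA by (simp add: sum.delta)
    finally show ?thesis .
  qed
  have s5: "(\<Sum>x\<in>?A. if P x then card {c\<in>C. x \<in> VR k (R c)} else 0) = (\<Sum>c\<in>C. card {x\<in>?A. P x \<and> x \<in> VR k (R c)})"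
    by (rule sum_card_swap[OF finA finC])
  have s6: "card {x\<in>?A. P x \<and> x \<in> VR k (R c)} = cnt (VR k (R c)) P" for c
  proof -
    have "{x\<in>?A. P x \<and> x \<in> VR k (R c)} = {x\<in>VR k (R c). P x}" using VR_sub nP by auto
    then show ?thesis unfolding cnt_def by simp
  qed
  have s7: "card {x\<in>?A. P x} = cnt (Vk k) P"
  proof -
    have "{x\<in>?A. P x} = {x\<in>Vk k. P x}" using nP by auto
    then show ?thesis unfolding cnt_def by simp
  qed
  show ?thesis using s1 s2 s3 s4 s5 s6 s7 by simp
qed

lemma length_identity: "LL + 2 + (\<Sum>c\<in>C. 2 ^ (k - c) - 1) = M * (2 ^ k - 1)"
proof -
  let ?P = "\<lambda>x. x \<noteq> zv k"
  have g: "(\<Sum>x\<in>Vk k. if ?P x then ff N x else 0) + (if ?P (p0 k) then 2 else 0)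
         + (\<Sum>c\<in>C. cnt (VR k (R c)) ?P) = M * cnt (Vk k) ?P" for N
    by (rule GS) simp
  have a: "(\<Sum>x\<in>Vk k. if ?P x then ff N x else 0) = LL" for N
  proof -
    have "(\<Sum>x\<in>Vk k. if ?P x then ff N x else 0) = (\<Sum>x\<in>Vk k - {zv k}. if ?P x then ff N x else 0)"
      by (rule sum_split_zero) simp
    also have "\<dots> = LL" unfolding LL_def ff_def by (intro sum.cong) auto
    finally show ?thesis .
  qed
  have cntV: "cnt V ?P = card V - 1" if "zv k \<in> V" "finite V" for V
  proof -
    have "{x\<in>V. ?P x} = V - {zv k}" by auto
    then show ?thesis unfolding cnt_def using that by simp
  qed
  have "zv k \<in> Vk k" unfolding Vk_def by simp
  then have c1: "cnt (Vk k) ?P = 2 ^ k - 1" using cntV[of "Vk k"] by simp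
  have c2: "cnt (VR k (R c)) ?P = 2 ^ (k - c) - 1" if "c \<in> C" for c
  proof -
    have "zv k \<in> VR k (R c)" "finite (VR k (R c))" using subsp_VR[of k "R c"] subsp_finite unfolding subsp_def by auto
    moreover have "R c \<noteq> 0" "degree (R c) < k" using irr[OF that] cC[OF that] by auto
    ultimately have "cnt (VR k (R c)) ?P = card (VR k (R c)) - 1" "card (VR k (R c)) = 2 ^ (k - degree (R c))"
      using cntV card_VR by auto
    then show ?thesis using irr[OF that] by simp
  qed
  have "(\<Sum>c\<in>C. cnt (VR k (R c)) ?P) = (\<Sum>c\<in>C. 2 ^ (k - c) - 1)" using c2 by (rule sum.cong[OF refl])
  then show ?thesis using g[of 0] a[of 0] c1 p0_nz[OF k1] by simp
qed

lemma total_length: "LL \<le> N \<Longrightarrow> (\<Sum>x\<in>Vk k. ff N x) = N"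
proof -
  assume LN: "LL \<le> N"
  have z: "zv k \<in> Vk k" unfolding Vk_def by simp
  have "(\<Sum>x\<in>Vk k. ff N x) = ff N (zv k) + (\<Sum>x\<in>Vk k - {zv k}. ff N x)"
    by (rule sum.remove[OF finite_Vk z])
  also have "(\<Sum>x\<in>Vk k - {zv k}. ff N x) = LL" unfolding LL_def ff_def by (intro sum.cong) auto
  finally show ?thesis using LN unfolding ff_def by simp
qed

lemma weight_bound:
  assumes u: "u \<in> Vk k" "u \<noteq> zv k"
  shows "(\<Sum>x\<in>Vk k. if dot u x then ff N x else 0) + 2 + (\<Sum>c\<in>C. 2 ^ (k - 1 - c)) \<ge> M * 2 ^ (k - 1)"
proof -
  have lu: "length u = k" using u unfolding Vk_def by simp
  have g: "(\<Sum>x\<in>Vk k. if dot u x then ff N x else 0) + (if dot u (p0 k) then 2 else 0)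
         + (\<Sum>c\<in>C. cnt (VR k (R c)) (dot u)) = M * cnt (Vk k) (dot u)"
    by (rule GS) simp
  have c1: "cnt (Vk k) (dot u) = 2 ^ (k - 1)" using cnt_Vk[OF lu] u by simp
  have c2: "cnt (VR k (R c)) (dot u) \<le> 2 ^ (k - 1 - c)" if c: "c \<in> C" for c
  proof -
    have "R c \<noteq> 0" "degree (R c) < k" using irr[OF c] cC[OF c] by auto
    then have cv: "card (VR k (R c)) = 2 ^ (k - c)" using card_VR irr[OF c] by simp
    have "k - c \<ge> 1" using cC[OF c] by linarith
    from cnt_le[OF subsp_VR lu cv this] show ?thesis by (simp add: diff_commute)
  qed
  have "(\<Sum>c\<in>C. cnt (VR k (R c)) (dot u)) \<le> (\<Sum>c\<in>C. 2 ^ (k - 1 - c))" using c2 by (rule sum_mono)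
  moreover have "(if dot u (p0 k) then 2 else 0) \<le> (2::nat)" by simp
  ultimately show ?thesis using g[unfolded c1] by linarith
qed

lemma inter_even:
  assumes u: "u \<in> Vk k" and v: "v \<in> Vk k"
  shows "even (\<Sum>x\<in>Vk k. if dot u x \<and> dot v x then ff N x else 0)"
proof -
  have lu: "length u = k" and lv: "length v = k" using u v unfolding Vk_def by auto
  let ?P = "\<lambda>x. dot u x \<and> dot v x"
  have g: "(\<Sum>x\<in>Vk k. if ?P x then ff N x else 0) + (if ?P (p0 k) then 2 else 0)
         + (\<Sum>c\<in>C. cnt (VR k (R c)) ?P) = M * cnt (Vk k) ?P"
    by (rule GS) simp
  have e1: "even (cnt (Vk k) ?P)"
    using even_inter[OF subsp_Vk lu lv card_Vk] k5 by simp
  have e2: "even (cnt (VR k (R c)) ?P)" if c: "c \<in> C" for c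
  proof -
    have "R c \<noteq> 0" "degree (R c) < k" using irr[OF c] cC[OF c] by auto
    then have cv: "card (VR k (R c)) = 2 ^ (k - c)" using card_VR irr[OF c] by simp
    have "k - c \<ge> 3" using cC[OF c] k5 by linarith
    from even_inter[OF subsp_VR lu lv cv this] show ?thesis .
  qed
  have "even (\<Sum>c\<in>C. cnt (VR k (R c)) ?P)" using e2 by (intro dvd_sum) auto
  moreover have "even (if ?P (p0 k) then 2 else (0::nat))" by simp
  moreover have "even (M * cnt (Vk k) ?P)" using e1 by simp
  ultimately have "even ((\<Sum>x\<in>Vk k. if ?P x then ff N x else 0) + (if ?P (p0 k) then 2 else 0)
         + (\<Sum>c\<in>C. cnt (VR k (R c)) ?P))" using g by simp
  then show ?thesis using \<open>even (\<Sum>c\<in>C. cnt (VR k (R c)) ?P)\<close> by simp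
qed

lemma wt_zv: "wt (zv n) = 0" by (simp add: wt_def)

lemma code_exists:
  assumes LN: "M * (2 ^ k - 1) \<le> N + 2 + (\<Sum>c\<in>C. 2 ^ (k - c) - 1)"
    and DM: "D + 2 + (\<Sum>c\<in>C. 2 ^ (k - 1 - c)) \<le> M * 2 ^ (k - 1)" and D1: "D \<ge> 1"
  shows "\<exists>C0. so_code N k C0 \<and> (\<forall>x\<in>C0. x \<noteq> zv N \<longrightarrow> wt x \<ge> D)"
proof -
  have LLN: "LL \<le> N" using length_identity LN by linarith
  define f where "f = ff N"
  have lenf: "(\<Sum>x\<in>Vk k. f x) = N" unfolding f_def using total_length[OF LLN] .
  define C0 where "C0 = enc k f ` Vk k"
  have W: "wt (enc k f u) \<ge> D" if u: "u \<in> Vk k" "u \<noteq> zv k" for u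
    using weight_bound[OF u, of N] DM unfolding f_def wt_enc by linarith
  have lenC: "length (enc k f u) = N" for u using lenf by simp
  have zC: "enc k f (zv k) = zv N" using enc_zero[of k f] lenf by simp
  have inj: "inj_on (enc k f) (Vk k)"
  proof (rule inj_onI)
    fix u v assume u: "u \<in> Vk k" and v: "v \<in> Vk k" and e: "enc k f u = enc k f v"
    have lu: "length u = k" and lv: "length v = k" using u v unfolding Vk_def by auto
    show "u = v"
    proof (rule ccontr)
      assume ne: "u \<noteq> v"
      have wV: "vadd u v \<in> Vk k" using lu lv unfolding Vk_def by simp
      have wnz: "vadd u v \<noteq> zv k" using vadd_eq_zero_iff[of u v] lu lv ne by simp
      have "enc k f (vadd u v) = vadd (enc k f u) (enc k f v)" using enc_vadd[OF lu lv] by simp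
      also have "\<dots> = zv N" using e lenC by simp
      finally have "wt (enc k f (vadd u v)) = 0" using wt_zv by simp
      with W[OF wV wnz] D1 show False by simp
    qed
  qed
  have lin: "lin_code N k C0"
    unfolding lin_code_def
  proof (intro conjI ballI)
    show "length x = N" if "x \<in> C0" for x using that lenC unfolding C0_def by auto
    show "zv N \<in> C0" unfolding C0_def using zC by (metis image_eqI zv_Vk)
    show "vadd x y \<in> C0" if xy: "x \<in> C0" "y \<in> C0" for x y
    proof -
      obtain u v where uv: "u \<in> Vk k" "v \<in> Vk k" "x = enc k f u" "y = enc k f v" using xy unfolding C0_def by blast
      have lu: "length u = k" and lv: "length v = k" using uv unfolding Vk_def by auto
      have "vadd x y = enc k f (vadd u v)" using enc_vadd[OF lu lv] uv by simp
      moreover have "vadd u v \<in> Vk k" using lu lv unfolding Vk_def by simp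
      ultimately show ?thesis unfolding C0_def by blast
    qed
    show "card C0 = 2 ^ k" unfolding C0_def using card_image[OF inj] by simp
  qed
  have so: "self_orth C0"
    unfolding self_orth_def
  proof (intro ballI)
    fix x y assume "x \<in> C0" "y \<in> C0"
    then obtain u v where uv: "u \<in> Vk k" "v \<in> Vk k" "x = enc k f u" "y = enc k f v" unfolding C0_def by blast
    show "orth x y" unfolding uv orth_enc f_def using inter_even[OF uv(1,2)] .
  qed
  have wts: "\<forall>x\<in>C0. x \<noteq> zv N \<longrightarrow> wt x \<ge> D"
  proof (intro ballI impI)
    fix x assume x: "x \<in> C0" "x \<noteq> zv N"
    then obtain u where u: "u \<in> Vk k" "x = enc k f u" unfolding C0_def by blast
    have "u \<noteq> zv k" using u x zC by auto
    then show "wt x \<ge> D" using W u by simp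
  qed
  show ?thesis using lin so wts unfolding so_code_def by blast
qed

end

lemma lin_finite: "lin_code n k C \<Longrightarrow> finite C"
proof -
  assume "lin_code n k C"
  then have "card C = 2 ^ k" unfolding lin_code_def by simp
  then show "finite C" by (metis card.infinite power_not_zero zero_neq_numeral)
qed

lemma lin_nonzero: 
  assumes "lin_code n k C" "k \<ge> 1" shows "\<exists>x\<in>C. x \<noteq> zv n"
proof (rule ccontr)
  assume "\<not> ?thesis"
  then have "C \<subseteq> {zv n}" by auto
  then have "card C \<le> card {zv n}" by (intro card_mono) auto
  then have "card C \<le> 1" by simp
  moreover have "(2::nat) ^ k \<ge> 2" using assms(2) by (cases k) auto
  ultimately show False using assms(1) unfolding lin_code_def by simp
qed

lemma min_dist_set:
  assumes "lin_code n k C"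
  shows "{wt x | x. x \<in> C \<and> x \<noteq> replicate (length x) False} = wt ` {x\<in>C. x \<noteq> zv n}"
  using assms unfolding lin_code_def by auto

lemma min_dist_ge:
  assumes lin: "lin_code n k C" and k1: "k \<ge> 1" and w: "\<forall>x\<in>C. x \<noteq> zv n \<longrightarrow> wt x \<ge> D"
  shows "min_dist C \<ge> D"
proof -
  have fin: "finite (wt ` {x\<in>C. x \<noteq> zv n})" using lin_finite[OF lin] by simp
  have ne: "wt ` {x\<in>C. x \<noteq> zv n} \<noteq> {}" using lin_nonzero[OF lin k1] by auto
  show ?thesis unfolding min_dist_def min_dist_set[OF lin]
    using Min_ge_iff[OF fin ne] w by auto
qed

lemma min_dist_le:
  assumes lin: "lin_code n k C" and x: "x \<in> C" "x \<noteq> zv n"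
  shows "min_dist C \<le> wt x"
proof -
  have fin: "finite (wt ` {x\<in>C. x \<noteq> zv n})" using lin_finite[OF lin] by simp
  show ?thesis unfolding min_dist_def min_dist_set[OF lin]
    using Min_le[OF fin] x by auto
qed

lemma so_even: 
  assumes "so_code n k C" "x \<in> C" shows "even (wt x)"
proof -
  have "orth x x" using assms unfolding so_code_def self_orth_def by auto
  then have "even (card {i. i < length x \<and> x ! i})" unfolding orth_def by simp
  moreover have "wt x = card {i. i < length x \<and> x ! i}" unfolding wt_def length_filter_conv_card by simp
  ultimately show ?thesis by simp
qed

lemma GG_ge: "k \<ge> 1 \<Longrightarrow> GG k e \<ge> e"
  by (cases k) (auto simp: GG_Suc)

lemma so_upper:
  assumes so: "so_code N k C" and k1: "k \<ge> 1" and ev: "even D" and lt: "N < GG k (D + 2)"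
  shows "min_dist C \<le> D"
proof (rule ccontr)
  assume "\<not> ?thesis"
  then have md: "min_dist C \<ge> D + 1" by simp
  have lin: "lin_code N k C" using so unfolding so_code_def by simp
  have "\<forall>x\<in>C. x \<noteq> zv N \<longrightarrow> wt x \<ge> D + 2"
  proof (intro ballI impI)
    fix x assume x: "x \<in> C" "x \<noteq> zv N"
    have "wt x \<ge> D + 1" using min_dist_le[OF lin x] md by simp
    moreover have "even (wt x)" using so_even[OF so x(1)] .
    ultimately show "wt x \<ge> D + 2" using ev by presburger
  qed
  then have "N \<ge> GG k (D + 2)" using griesmer[OF lin] by blast
  with lt show False by simp
qed

theorem theorem5p6:
  fixes k m d N :: nat
  assumes "k \<ge> 5" and "4 dvd d"
    and "int m \<ge> min \<lceil>(real k + 2) * (real k - 3) / (2 * real k)\<rceil>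
                      \<lceil>sqrt (2 * real k + 1/4) - 3/2\<rceil> - 1"
    and "m * (2 ^ k - 1) + g k (d + 2) + 1 \<le> N"
    and "N \<le> m * (2 ^ k - 1) + g k (d + 4) - 1"
  shows "(\<exists>C. so_code N k C) \<and> d_so N k = m * 2 ^ (k - 1) + d + 2"
proof -
  note k5 = assms(1) and d4 = assms(2) and N1 = assms(4) and N2 = assms(5)
  have k1: "k \<ge> 1" using k5 by simp
  from threshold[OF k5 assms(3)] have m1: "m \<ge> 1" and tb: "\<And>t. t * (t + 1) \<le> 2 * (k - 1) \<Longrightarrow> t \<le> m + 1"
    by auto
  define P :: nat where "P = 2 ^ (k - 1)"
  have km: "k - 1 = (k - 3) + 2" using k5 by simp
  have P4: "P = 4 * 2 ^ (k - 3)" unfolding P_def km by (simp add: power_add)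
  define q where "q = (d + 2) div P"
  define r where "r = (d + 2) mod P"
  have dqr: "d + 2 = q * P + r" unfolding q_def r_def by simp
  have rP: "r < P" unfolding r_def P_def by simp
  obtain a where a: "d = 4 * a" using d4 by (elim dvdE)
  have b: "q * P = 4 * (q * 2 ^ (k - 3))" using P4 by simp
  define bb where "bb = q * 2 ^ (k - 3)"
  have e4: "4 * a + 2 = 4 * bb + r" using dqr a b unfolding bb_def by simp
  have r4: "r mod 4 = 2" using e4 by presburger
  define s where "s = P - r"
  have sr: "s + r = P" unfolding s_def using rP by simp
  define cc where "cc = (2::nat) ^ (k - 3)"
  have c: "P = 4 * cc" using P4 unfolding cc_def .
  have s4: "s mod 4 = 2" using sr r4 c by presburger
  have r2: "r \<ge> 2" using r4 by presburger
  have sl: "s < 2 ^ (k - 1)" using sr r2 unfolding P_def by linarith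
  obtain C where Csub: "C \<subseteq> {1..k-3}" and sC: "s = 2 + (\<Sum>c\<in>C. 2 ^ (k - 1 - c))"
    and FFs: "FF k s = 3 + (\<Sum>c\<in>C. 2 ^ (k - c) - 1)"
    using s_decomp[OF k5 s4 sl] by blast
  have finC: "finite C" using Csub finite_subset by blast
  have C0: "0 \<notin> C" using Csub by auto
  define R where "R c = (SOME f :: F2 poly. irreducible f \<and> degree f = c)" for c
  have irr: "irreducible (R c) \<and> degree (R c) = c" if "c \<in> C" for c
  proof -
    have "c \<ge> 1" using that Csub by auto
    from irreducible_exists[OF this] show ?thesis unfolding R_def by (rule someI_ex)
  qed
  define M where "M = m + q + 1"
  have M2: "M \<ge> 2" unfolding M_def using m1 by simp
  have mult: "card {c\<in>C. x \<in> VR k (R c)} \<le> M" if x: "x \<in> Vk k" "x \<noteq> zv k" for x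
  proof -
    have "card {c\<in>C. x \<in> VR k (R c)} * (card {c\<in>C. x \<in> VR k (R c)} + 1) \<le> 2 * (k - 1)"
      by (rule multiplicity_bound[OF finC C0 irr x k1]) 
    then have "card {c\<in>C. x \<in> VR k (R c)} \<le> m + 1" by (rule tb)
    then show ?thesis unfolding M_def by simp
  qed
  define T :: nat where "T = 2 ^ k - 1"
  have gd2: "g k (d + 2) = q * T + (T - FF k s)"
  proof -
    have "g k (d + 2) = GG k (q * 2 ^ (k - 1) + r)" unfolding g_eq_GG dqr P_def by simp
    also have "\<dots> = q * T + GG k r" unfolding T_def by (rule GG_shift)
    finally have e1: "g k (d + 2) = q * T + GG k r" .
    have "s \<le> 2 ^ (k - 1)" using sl by simp
    from GG_comp[OF this k1] have "GG k (2 ^ (k - 1) - s) + FF k s = T" unfolding T_def .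
    moreover have "2 ^ (k - 1) - s = r" using sr unfolding P_def by simp
    ultimately have "GG k r + FF k s = T" by simp
    then show ?thesis using e1 by simp
  qed
  have MT: "M * T = m * T + q * T + T" unfolding M_def by (simp add: algebra_simps)
  have LN: "M * (2 ^ k - 1) \<le> N + 2 + (\<Sum>c\<in>C. 2 ^ (k - c) - 1)"
  proof -
    have "FF k s \<le> T"
    proof -
      have "s \<le> 2 ^ (k - 1)" using sl by simp
      from GG_comp[OF this k1] show ?thesis unfolding T_def by linarith
    qed
    then show ?thesis using N1 gd2 MT FFs unfolding T_def[symmetric] by linarith
  qed
  define D0 where "D0 = m * 2 ^ (k - 1) + d + 2"
  have DM: "D0 + 2 + (\<Sum>c\<in>C. 2 ^ (k - 1 - c)) \<le> M * 2 ^ (k - 1)"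
  proof -
    have "M * P = m * P + q * P + P" unfolding M_def by (simp add: algebra_simps)
    then show ?thesis using dqr sr sC unfolding D0_def P_def[symmetric] by linarith
  qed
  have D1: "D0 \<ge> 1" unfolding D0_def by simp
  obtain C0 where so0: "so_code N k C0" and w0: "\<forall>x\<in>C0. x \<noteq> zv N \<longrightarrow> wt x \<ge> D0"
    using code_exists[OF k5 M2 Csub irr mult LN DM D1] by blast
  have lin0: "lin_code N k C0" using so0 unfolding so_code_def by simp
  have evD: "even D0"
  proof -
    have "even P" using c by simp
    then show ?thesis unfolding D0_def P_def[symmetric] using a by simp
  qed
  have ltG: "N < GG k (D0 + 2)"
  proof -
    have "GG k (D0 + 2) = GG k (m * 2 ^ (k - 1) + (d + 4))" unfolding D0_def by (rule arg_cong[where f="GG k"]) simp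
    also have "\<dots> = m * (2 ^ k - 1) + GG k (d + 4)" by (rule GG_shift)
    finally have "GG k (D0 + 2) = m * (2 ^ k - 1) + g k (d + 4)" by (simp add: g_eq_GG)
    moreover have "g k (d + 4) \<ge> 1" using GG_ge[OF k1, of "d + 4"] by (simp add: g_eq_GG)
    ultimately show ?thesis using N2 by linarith
  qed
  have upper: "min_dist C' \<le> D0" if "so_code N k C'" for C'
    using so_upper[OF that k1 evD ltG] .
  have md0: "min_dist C0 = D0"
    using upper[OF so0] min_dist_ge[OF lin0 k1 w0] by simp
  have "d_so N k = D0"
    unfolding d_so_def
  proof (rule Max_eqI)
    show "finite {min_dist C | C. so_code N k C}"
      by (rule finite_subset[of _ "{..D0}"]) (auto intro: upper)
    show "y \<le> D0" if "y \<in> {min_dist C | C. so_code N k C}" for y using that upper by auto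
    show "D0 \<in> {min_dist C | C. so_code N k C}" using so0 md0 by auto
  qed
  then show ?thesis using so0 unfolding D0_def by blast
qed

end
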